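(* Let $n\geqslant 2$ and fix a caterpillar species tree $S$ with $n$ leaves labeled by a set $X$. As $G$ ranges over all $n!/2$ caterpillar gene trees with leaves bijectively labeled by $X$, the distinct roadblock sets $B_{G,S}$ are in bijection with the monotonic lattice paths from $(0,0)$ to $(n-1,n-1)$ on the $(n-1)\times(n-1)$ lattice that do not cross above the diagonal $y=x$; in particular there are $C_{n-1}=\frac{1}{n}\binom{2n-2}{n-1}$ distinct roadblock sets.
   Context: All trees are binary, rooted, leaf-labeled. A caterpillar tree with $n$ leaves is a tree in which some internal node is descended from all other internal nodes. Its canonical label vector $(x_1,\dots,x_n)$ has $x_1,x_2$ the labels of the two leaves of the cherry (the unique internal node with exactly two descendant leaves) and, for $3\leqslant i\leqslant n$, $x_i$ the label of the leaf separated from the root by $n-i+1$ edges; vectors differing only by swapping $x_1,x_2$ describe the same tree. For caterpillars $G,S$ on the same label set with canonical vectors $\mathbf g,\mathbf s$, let $\sigma(x)$ be the index of label $x$ in $\mathbf s$, let $F(j)=\max\{\sigma(g_1),\dots,\sigma(g_{j+1})\}-1$ for $1\leqslant j\leqslant n-1$, and define the roadblock set $B_{G,S}=\{(i,j)\in\mathbb Z^2: 1\leqslant j\leqslant i\leqslant n-1,\ i<F(j)\}$. A monotonic path is a sequence of lattice points with steps $(1,0)$ or $(0,1)$; it does not cross above $y=x$ if all its points $(x,y)$ satisfy $y\leqslant x$. *)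

theory Defs
  imports Main
begin

text \<open>A caterpillar on the label set X is given by its canonical label vector
  (x_1,...,x_n), represented as a list of length n = card X whose entries are
  the labels of X, each exactly once. Vectors differing by a swap of x_1 and x_2
  describe the same tree.\<close>

definition cat_vecs :: "'a set \<Rightarrow> 'a list set" where
  "cat_vecs X = {g. distinct g \<and> set g = X}"

definition sigma :: "'a list \<Rightarrow> 'a \<Rightarrow> nat" where
  "sigma s x = (LEAST k. k < length s \<and> s ! k = x) + 1"

definition Ffun :: "'a list \<Rightarrow> 'a list \<Rightarrow> nat \<Rightarrow> int" where
  "Ffun g s j = int (Max {sigma s (g ! (k - 1)) | k. 1 \<le> k \<and> k \<le> j + 1}) - 1"

definition roadblock :: "'a list \<Rightarrow> 'a list \<Rightarrow> (int \<times> int) set" where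
  "roadblock g s = {(i, j). 1 \<le> j \<and> j \<le> i \<and> i \<le> int (length s) - 1
                        \<and> i < Ffun g s (nat j)}"

definition dyck_paths :: "nat \<Rightarrow> (int \<times> int) list set" where
  "dyck_paths m = {p. p \<noteq> [] \<and> hd p = (0, 0) \<and> last p = (int m, int m)
      \<and> (\<forall>k. Suc k < length p \<longrightarrow>
             (p ! Suc k = (fst (p ! k) + 1, snd (p ! k)) \<or>
              p ! Suc k = (fst (p ! k), snd (p ! k) + 1)))
      \<and> (\<forall>q \<in> set p. snd q \<le> fst q)}"

end

theory Submission
  imports Defs
begin


fun cnt :: "nat \<Rightarrow> nat \<Rightarrow> nat" where
"cnt a 0 = 1" |
"cnt 0 (Suc b) = 0" |
"cnt (Suc a) (Suc b) = (if b \<le> a then cnt a (Suc b) + cnt (Suc a) b else 0)"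

lemma cnt_formula: "b \<le> a + 1 \<Longrightarrow> int (cnt a b) =
   (if b = 0 then 1 else int ((a+b) choose b) - int ((a+b) choose (b-1)))"
proof (induction a b rule: cnt.induct)
  case (1 a) then show ?case by simp
next
  case (2 b) then show ?case by simp
next
  case (3 a b)
  show ?case
  proof (cases "b \<le> a")
    case True
    have e: "int (cnt (Suc a) (Suc b)) = int (cnt a (Suc b)) + int (cnt (Suc a) b)" using True by simp
    have i1: "int (cnt a (Suc b)) = int ((a+Suc b) choose Suc b) - int ((a+Suc b) choose b)"
      using 3(1) True by simp
    have i2: "int (cnt (Suc a) b) = (if b = 0 then 1 else int ((Suc a+b) choose b) - int ((Suc a+b) choose (b-1)))"
      using 3(2) True by simp
    show ?thesis
    proof (cases b)
      case 0 then show ?thesis using e i1 i2 by simp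
    next
      case (Suc b')
      have p1: "(Suc a + Suc b) choose Suc b = ((a + Suc b) choose Suc b) + ((a+Suc b) choose b)"
        using Suc by simp
      have p2: "(Suc a + Suc b) choose b = ((a + Suc b) choose b) + ((a+Suc b) choose b')"
        using Suc by simp
      show ?thesis using e i1 i2 p1 p2 Suc by simp
    qed
  next
    case False
    then have b: "b = Suc a" using 3(3) by simp
    have "(Suc a + Suc b) choose Suc b = (Suc a + Suc b) choose b"
      using b binomial_symmetric[of "Suc b" "Suc a + Suc b"] by simp
    then show ?thesis using False b by simp
  qed
qed

lemma binom_aux: "m = Suc k \<Longrightarrow> Suc m * ((2*m) choose (m - 1)) = m * ((2*m) choose m)"
proof -
  assume Suc: "m = Suc k"
  have a: "Suc k * ((2*k+2) choose Suc k) = (2*k+2) * ((2*k+1) choose k)"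
    using Suc_times_binomial_eq[of "2*k+1" k] by simp
  have s1: "(2*k+2) choose k = (2*k+2) choose (k+2)"
    using binomial_symmetric[of k "2*k+2"] by simp
  have s2: "(2*k+1) choose (k+1) = (2*k+1) choose k"
    using binomial_symmetric[of k "2*k+1"] by simp
  have b: "Suc (Suc k) * ((2*k+2) choose (k+2)) = (2*k+2) * ((2*k+1) choose (k+1))"
    using Suc_times_binomial_eq[of "2*k+1" "k+1"] by simp
  show ?thesis using a b s1 s2 Suc by (simp add: algebra_simps)
qed

lemma gen_alg: "(C::int) = B - A \<Longrightarrow> (M+1) * A = M * B \<Longrightarrow> (M+1) * C = B"
proof -
  assume h: "C = B - A" and h2: "(M+1) * A = M * B"
  have "(M+1)*C = (M+1)*B - (M+1)*A" by (simp add: h right_diff_distrib)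
  also have "\<dots> = (M+1)*B - M*B" using h2 by simp
  also have "\<dots> = B" by (simp add: algebra_simps)
  finally show ?thesis .
qed

lemma cnt_catalan: "cnt m m = ((2*m) choose m) div (m+1)"
proof (cases m)
  case 0 then show ?thesis by simp
next
  case (Suc k)
  have "int (cnt m m) = int ((2*m) choose m) - int ((2*m) choose (m-1))"
    using cnt_formula[of m m] Suc by (simp add: mult_2)
  moreover have "int (Suc m) * int ((2*m) choose (m - 1)) = int m * int ((2*m) choose m)"
  proof -
    have h: "Suc m * ((2*m) choose (m - 1)) = m * ((2*m) choose m)" by (rule binom_aux[OF Suc])
    have "int (Suc m * ((2*m) choose (m - 1))) = int (m * ((2*m) choose m))" by (simp only: h)
    then show ?thesis by (simp only: of_nat_mult)
  qed
  ultimately have e: "(int m + 1) * int (cnt m m) = int ((2*m) choose m)"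
    using gen_alg[of "int (cnt m m)" "int ((2*m) choose m)" "int ((2*m) choose (m - 1))" "int m"]
    by (simp add: add.commute)
  then have "int ((m+1) * cnt m m) = int ((2*m) choose m)" by (simp only: of_nat_mult of_nat_add of_nat_1)
  then have "(m+1) * cnt m m = (2*m) choose m" by (simp only: of_nat_eq_iff)
  then show ?thesis using nonzero_mult_div_cancel_left[of "m+1" "cnt m m"] by simp
qed



definition stepok :: "(int \<times> int) list \<Rightarrow> bool" where
  "stepok p = (\<forall>k. Suc k < length p \<longrightarrow>
             (p ! Suc k = (fst (p ! k) + 1, snd (p ! k)) \<or>
              p ! Suc k = (fst (p ! k), snd (p ! k) + 1)))"

definition dp :: "int \<Rightarrow> int \<Rightarrow> (int \<times> int) list set" where
  "dp a b = {p. p \<noteq> [] \<and> hd p = (0, 0) \<and> last p = (a, b) \<and> stepok p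
      \<and> (\<forall>q \<in> set p. snd q \<le> fst q)}"

lemma dyck_dp: "dyck_paths m = dp (int m) (int m)"
  by (simp add: dyck_paths_def dp_def stepok_def)

lemma step_inv:
  assumes "stepok p" "p \<noteq> []" "hd p = (0,0)"
  shows "k < length p \<Longrightarrow> fst (p!k) + snd (p!k) = int k \<and> fst (p!k) \<ge> 0 \<and> snd (p!k) \<ge> 0"
proof (induction k)
  case 0
  then show ?case using assms by (simp add: hd_conv_nth[symmetric])
next
  case (Suc k)
  then have "p ! Suc k = (fst (p ! k) + 1, snd (p ! k)) \<or> p ! Suc k = (fst (p ! k), snd (p ! k) + 1)"
    using assms(1) unfolding stepok_def by blast
  then show ?case using Suc by auto
qed

lemma stepok_snoc:
  assumes "q \<noteq> []"
  shows "stepok (q@[x]) \<longleftrightarrow> stepok q \<and> (x = (fst (last q)+1, snd (last q)) \<or> x = (fst (last q), snd (last q)+1))"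
proof
  assume h: "stepok (q@[x])"
  have "stepok q" unfolding stepok_def
  proof (intro allI impI)
    fix k assume k: "Suc k < length q"
    then show "q ! Suc k = (fst (q ! k) + 1, snd (q ! k)) \<or> q ! Suc k = (fst (q ! k), snd (q ! k) + 1)"
      using h[unfolded stepok_def, rule_format, of k] by (simp add: nth_append)
  qed
  moreover have "x = (fst (last q)+1, snd (last q)) \<or> x = (fst (last q), snd (last q)+1)"
  proof -
    obtain k where k: "length q = Suc k" using assms by (cases q) auto
    have "last q = q ! k" using k assms by (simp add: last_conv_nth)
    then show ?thesis using h[unfolded stepok_def, rule_format, of k] k by (simp add: nth_append)
  qed
  ultimately show "stepok q \<and> (x = (fst (last q)+1, snd (last q)) \<or> x = (fst (last q), snd (last q)+1))" by blast
next
  assume h: "stepok q \<and> (x = (fst (last q)+1, snd (last q)) \<or> x = (fst (last q), snd (last q)+1))"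
  show "stepok (q@[x])" unfolding stepok_def
  proof (intro allI impI)
    fix k assume k: "Suc k < length (q@[x])"
    show "(q@[x]) ! Suc k = (fst ((q@[x]) ! k) + 1, snd ((q@[x]) ! k)) \<or> (q@[x]) ! Suc k = (fst ((q@[x]) ! k), snd ((q@[x]) ! k) + 1)"
    proof (cases "Suc k < length q")
      case True
      then show ?thesis using h[THEN conjunct1, unfolded stepok_def, rule_format, of k] by (simp add: nth_append)
    next
      case False
      then have "Suc k = length q" using k by simp
      moreover have "last q = q ! k" using calculation assms by (metis diff_Suc_1 last_conv_nth)
      ultimately show ?thesis using h by (simp add: nth_append)
    qed
  qed
qed

lemma dp_00: "dp 0 0 = {[(0,0)]}"
proof
  show "{[(0,0)]} \<subseteq> dp 0 0" by (simp add: dp_def stepok_def)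
  show "dp 0 0 \<subseteq> {[(0,0)]}"
  proof
    fix p assume p: "p \<in> dp 0 0"
    then have ne: "p \<noteq> []" and h: "hd p = (0,0)" and l: "last p = (0,0)" and st: "stepok p"
      by (auto simp: dp_def)
    have "length p = 1"
    proof (rule ccontr)
      assume "length p \<noteq> 1"
      then obtain k where k: "length p = Suc k" "k > 0" using ne by (cases "length p") auto
      have "last p = p ! k" using k ne by (simp add: last_conv_nth)
      then have "p ! k = (0,0)" using l by simp
      then show False using step_inv[OF st ne h, of k] k by simp
    qed
    then show "p \<in> {[(0,0)]}" using h by (cases p) auto
  qed
qed

lemma dp_empty: "a < 0 \<or> b < 0 \<or> b > a \<Longrightarrow> dp a b = {}"
proof -
  assume c: "a < 0 \<or> b < 0 \<or> b > a"
  { fix p assume p: "p \<in> dp a b"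
    then have ne: "p \<noteq> []" and h: "hd p = (0,0)" and l: "last p = (a,b)" and st: "stepok p"
      and all: "\<forall>q\<in>set p. snd q \<le> fst q"
      by (auto simp: dp_def)
    obtain k where k: "length p = Suc k" using ne by (cases p) auto
    have lk: "last p = p ! k" using k ne by (simp add: last_conv_nth)
    have "(a,b) \<in> set p" using l ne last_in_set by metis
    then have False using step_inv[OF st ne h, of k] k l lk c all by auto }
  then show ?thesis by blast
qed

lemma dp_rec:
  assumes "(a,b) \<noteq> (0,0)" "b \<le> a"
  shows "dp a b = (\<lambda>q. q@[(a,b)]) ` (dp (a-1) b \<union> dp a (b-1))"
proof
  show "dp a b \<subseteq> (\<lambda>q. q@[(a,b)]) ` (dp (a-1) b \<union> dp a (b-1))"
  proof
    fix p assume p: "p \<in> dp a b"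
    then have ne: "p \<noteq> []" and h: "hd p = (0,0)" and l: "last p = (a,b)" and st: "stepok p"
      and all: "\<forall>q\<in>set p. snd q \<le> fst q"
      by (auto simp: dp_def)
    have "p = butlast p @ [(a,b)]" using ne l by (metis append_butlast_last_id)
    moreover have bne: "butlast p \<noteq> []"
    proof
      assume "butlast p = []"
      then have "p = [(a,b)]" using calculation by simp
      then show False using h assms by simp
    qed
    ultimately obtain q where q: "p = q@[(a,b)]" "q \<noteq> []" by blast
    have hq: "hd q = (0,0)" using h q by simp
    have sq: "stepok q" and xs: "(a,b) = (fst (last q)+1, snd (last q)) \<or> (a,b) = (fst (last q), snd (last q)+1)"
      using st q stepok_snoc[of q "(a,b)"] by auto
    have aq: "\<forall>x\<in>set q. snd x \<le> fst x" using all q by auto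
    have "q \<in> dp (a-1) b \<union> dp a (b-1)"
      using xs q hq sq aq by (cases "last q") (auto simp: dp_def)
    then show "p \<in> (\<lambda>q. q@[(a,b)]) ` (dp (a-1) b \<union> dp a (b-1))" using q by blast
  qed
  show "(\<lambda>q. q@[(a,b)]) ` (dp (a-1) b \<union> dp a (b-1)) \<subseteq> dp a b"
  proof
    fix p assume "p \<in> (\<lambda>q. q@[(a,b)]) ` (dp (a-1) b \<union> dp a (b-1))"
    then obtain q where q: "p = q@[(a,b)]" "q \<in> dp (a-1) b \<union> dp a (b-1)" by blast
    then have ne: "q \<noteq> []" and h: "hd q = (0,0)" and st: "stepok q"
      and all: "\<forall>x\<in>set q. snd x \<le> fst x"
      and l: "last q = (a-1,b) \<or> last q = (a,b-1)"
      by (auto simp: dp_def)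
    have "stepok p" using stepok_snoc[OF ne, of "(a,b)"] st l q by auto
    then show "p \<in> dp a b" using q ne h all assms by (auto simp: dp_def)
  qed
qed

lemma card_snoc_union:
  assumes "finite A" "finite B" "A \<inter> B = {}"
  shows "finite ((\<lambda>q. q@[x]) ` (A \<union> B)) \<and> card ((\<lambda>q. q@[x]) ` (A \<union> B)) = card A + card B"
proof -
  have "inj_on (\<lambda>q. q@[x]) (A \<union> B)" by (auto simp: inj_on_def)
  then show ?thesis using assms by (simp add: card_image card_Un_disjoint)
qed

lemma dp_disj: "(a,b) \<noteq> (c,d) \<Longrightarrow> dp a b \<inter> dp c d = {}"
  by (auto simp: dp_def)

lemma dp_card0: "finite (dp (int a) 0) \<and> card (dp (int a) 0) = 1"
proof (induction a)
  case 0 then show ?case by (simp add: dp_00)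
next
  case (Suc a)
  have "dp (int (Suc a)) 0 = (\<lambda>q. q@[(int (Suc a),0)]) ` (dp (int a) 0 \<union> dp (int (Suc a)) (-1))"
    using dp_rec[of "int (Suc a)" 0] by simp
  moreover have "dp (int (Suc a)) (-1) = {}" by (rule dp_empty) simp
  ultimately show ?case using Suc card_snoc_union[of "dp (int a) 0" "{}"] by simp
qed

lemma dp_card: "finite (dp (int a) (int b)) \<and> card (dp (int a) (int b)) = cnt a b"
proof (induction a b rule: cnt.induct)
  case (1 a) then show ?case using dp_card0 by simp
next
  case (2 b) then show ?case using dp_empty[of 0 "int (Suc b)"] by simp
next
  case (3 a b)
  show ?case
  proof (cases "b \<le> a")
    case True
    have "dp (int (Suc a)) (int (Suc b)) = (\<lambda>q. q@[(int (Suc a), int (Suc b))]) ` (dp (int a) (int (Suc b)) \<union> dp (int (Suc a)) (int b))"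
      using dp_rec[of "int (Suc a)" "int (Suc b)"] True by simp
    moreover have "dp (int a) (int (Suc b)) \<inter> dp (int (Suc a)) (int b) = {}" by (rule dp_disj) simp
    ultimately show ?thesis using 3 True card_snoc_union[of "dp (int a) (int (Suc b))" "dp (int (Suc a)) (int b)"]
      by simp
  next
    case False
    then show ?thesis using dp_empty[of "int (Suc a)" "int (Suc b)"] by simp
  qed
qed



definition seqs :: "nat \<Rightarrow> nat \<Rightarrow> nat list set" where
  "seqs k c = {t. length t = k \<and> sorted t \<and> (\<forall>i<k. Suc i \<le> t!i) \<and> (\<forall>x\<in>set t. x \<le> c)}"

lemma seqs_0: "seqs 0 c = {[]}"
  by (auto simp: seqs_def)

lemma seqs_empty: "c < k \<Longrightarrow> seqs k c = {}"
proof -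
  assume ck: "c < k"
  { fix t assume t: "t \<in> seqs k c"
    then have "length t = k" "\<forall>x\<in>set t. x \<le> c" by (auto simp: seqs_def)
    moreover have "Suc (k-1) \<le> t!(k-1)" 
    proof -
      have lb: "\<forall>i<k. Suc i \<le> t!i" using t by (simp add: seqs_def)
      show ?thesis using lb[rule_format, of "k-1"] ck by simp
    qed
    moreover have "t!(k-1) \<in> set t" using calculation ck by simp
    ultimately have False using ck by fastforce }
  then show ?thesis by blast
qed

lemma seqs_rec:
  assumes "0 < k" "k \<le> c"
  shows "seqs k c = (\<lambda>t. t@[c]) ` seqs (k-1) c \<union> seqs k (c-1)"
proof
  show "seqs k c \<subseteq> (\<lambda>t. t@[c]) ` seqs (k-1) c \<union> seqs k (c-1)"
  proof
    fix t assume t: "t \<in> seqs k c"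
    then have l: "length t = k" and so: "sorted t" and lb: "\<forall>i<k. Suc i \<le> t!i" and ub: "\<forall>x\<in>set t. x \<le> c"
      by (auto simp: seqs_def)
    obtain t' x where tx: "t = t'@[x]" using l assms by (metis length_0_conv neq0_conv rev_exhaust)
    show "t \<in> (\<lambda>t. t@[c]) ` seqs (k-1) c \<union> seqs k (c-1)"
    proof (cases "x = c")
      case True
      have "\<forall>i<k-1. Suc i \<le> t'!i"
      proof (intro allI impI)
        fix i assume i: "i < k - 1"
        then have "Suc i \<le> t!i" using lb by simp
        moreover have "i < length t'" using i tx l by simp
        ultimately show "Suc i \<le> t'!i" using tx by (simp add: nth_append)
      qed
      then have "t' \<in> seqs (k-1) c"
        unfolding seqs_def using l so ub tx by (auto simp: sorted_append)
      then show ?thesis using tx True by blast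
    next
      case False
      then have "x < c" using ub tx by fastforce
      moreover have "\<forall>y\<in>set t. y \<le> x" using so tx by (auto simp: sorted_append)
      ultimately have "\<forall>y\<in>set t. y \<le> c - 1" by fastforce
      then show ?thesis using l so lb by (auto simp: seqs_def)
    qed
  qed
  show "(\<lambda>t. t@[c]) ` seqs (k-1) c \<union> seqs k (c-1) \<subseteq> seqs k c"
  proof
    fix t assume "t \<in> (\<lambda>t. t@[c]) ` seqs (k-1) c \<union> seqs k (c-1)"
    then show "t \<in> seqs k c"
    proof
      assume "t \<in> (\<lambda>t. t@[c]) ` seqs (k-1) c"
      then obtain t' where t': "t = t'@[c]" "length t' = k - 1" "sorted t'" "\<forall>i<k-1. Suc i \<le> t'!i"
        "\<forall>x\<in>set t'. x \<le> c" by (auto simp: seqs_def)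
      have "\<forall>i<k. Suc i \<le> t!i"
      proof (intro allI impI)
        fix i assume "i < k"
        then show "Suc i \<le> t!i" using t' assms by (cases "i < k - 1") (auto simp: nth_append)
      qed
      then show ?thesis using t' assms by (auto simp: seqs_def sorted_append)
    next
      assume "t \<in> seqs k (c-1)"
      then show ?thesis by (auto simp: seqs_def)
    qed
  qed
qed

lemma seqs_card: "finite (seqs k c) \<and> card (seqs k c) = cnt c k"
proof (induction c k rule: cnt.induct)
  case (1 a) then show ?case by (simp add: seqs_0)
next
  case (2 b) then show ?case by (simp add: seqs_empty)
next
  case (3 a b)
  show ?case
  proof (cases "b \<le> a")
    case True
    have e: "seqs (Suc b) (Suc a) = (\<lambda>t. t@[Suc a]) ` seqs b (Suc a) \<union> seqs (Suc b) a"
      using seqs_rec[of "Suc b" "Suc a"] True by simp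
    have d: "(\<lambda>t. t@[Suc a]) ` seqs b (Suc a) \<inter> seqs (Suc b) a = {}"
      by (auto simp: seqs_def)
    have inj: "inj_on (\<lambda>t. t@[Suc a]) (seqs b (Suc a))" by (auto simp: inj_on_def)
    show ?thesis using 3 True e d card_image[OF inj] card_Un_disjoint[OF _ _ d] by simp
  next
    case False
    then show ?thesis using seqs_empty[of "Suc a" "Suc b"] by simp
  qed
qed



lemma sigma_nth: "distinct s \<Longrightarrow> i < length s \<Longrightarrow> sigma s (s!i) = Suc i"
  unfolding sigma_def
proof -
  assume d: "distinct s" and i: "i < length s"
  have "(LEAST k. k < length s \<and> s!k = s!i) = i"
    by (rule Least_equality) (use d i in \<open>auto simp: nth_eq_iff_index_eq\<close>)
  then show "(LEAST k. k < length s \<and> s!k = s!i) + 1 = Suc i" by simp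
qed

lemma sigma_set: "distinct s \<Longrightarrow> x \<in> set s \<Longrightarrow>
   1 \<le> sigma s x \<and> sigma s x \<le> length s \<and> s!(sigma s x - 1) = x"
proof -
  assume d: "distinct s" and x: "x \<in> set s"
  then obtain i where i: "i < length s" "x = s!i" by (auto simp: in_set_conv_nth)
  then show ?thesis using sigma_nth[OF d i(1)] by simp
qed

lemma sigma_inj: "distinct s \<Longrightarrow> inj_on (sigma s) (set s)"
  by (metis inj_onI sigma_set)

lemma take_img: "j < length g \<Longrightarrow> {f (g ! (k - 1)) | k. 1 \<le> k \<and> k \<le> Suc j} = f ` set (take (Suc j) g)"
proof
  assume j: "j < length g"
  show "{f (g ! (k - 1)) | k. 1 \<le> k \<and> k \<le> Suc j} \<subseteq> f ` set (take (Suc j) g)"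
  proof
    fix y assume "y \<in> {f (g ! (k - 1)) | k. 1 \<le> k \<and> k \<le> Suc j}"
    then obtain k where k: "y = f (g ! (k - 1))" "1 \<le> k" "k \<le> Suc j" by blast
    have "take (Suc j) g ! (k - 1) = g ! (k-1)" using k by simp
    moreover have "k - 1 < length (take (Suc j) g)" using k j by simp
    ultimately have "g ! (k-1) \<in> set (take (Suc j) g)" by (metis nth_mem)
    then show "y \<in> f ` set (take (Suc j) g)" using k by blast
  qed
  show "f ` set (take (Suc j) g) \<subseteq> {f (g ! (k - 1)) | k. 1 \<le> k \<and> k \<le> Suc j}"
  proof
    fix y assume "y \<in> f ` set (take (Suc j) g)"
    then obtain x where x: "y = f x" "x \<in> set (take (Suc j) g)" by blast
    then obtain i where i: "i < length (take (Suc j) g)" "x = take (Suc j) g ! i" by (auto simp: in_set_conv_nth)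
    then have "x = g ! (Suc i - 1)" "1 \<le> Suc i" "Suc i \<le> Suc j" by auto
    then show "y \<in> {f (g ! (k - 1)) | k. 1 \<le> k \<and> k \<le> Suc j}" using x by blast
  qed
qed

lemma card_le_Max: "finite V \<Longrightarrow> V \<noteq> {} \<Longrightarrow> 0 \<notin> V \<Longrightarrow> card V \<le> Max (V::nat set)"
proof -
  assume f: "finite V" and ne: "V \<noteq> {}" and z: "0 \<notin> V"
  have "V \<subseteq> {1..Max V}" using f z by (auto simp: Suc_le_eq) (metis gr0I)
  then have "card V \<le> card {1..Max V}" by (rule card_mono[rotated]) simp
  then show ?thesis by simp
qed

definition VV :: "'a list \<Rightarrow> 'a list \<Rightarrow> nat \<Rightarrow> nat set" where
  "VV s g j = sigma s ` set (take (Suc j) g)"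

lemma VV_props:
  assumes ds: "distinct s" and dg: "distinct g" and sg: "set g = set s" and j: "j < length s"
  shows "finite (VV s g j) \<and> VV s g j \<noteq> {} \<and> card (VV s g j) = Suc j \<and> VV s g j \<subseteq> {1..length s}
     \<and> Suc j \<le> Max (VV s g j) \<and> Max (VV s g j) \<le> length s"
proof -
  have lg: "length g = length s" using ds dg sg by (metis distinct_card)
  have sub: "set (take (Suc j) g) \<subseteq> set s" using sg by (metis set_take_subset)
  have inj: "inj_on (sigma s) (set (take (Suc j) g))" using sigma_inj[OF ds] sub by (rule inj_on_subset)
  have c: "card (VV s g j) = Suc j" unfolding VV_def using card_image[OF inj] distinct_card[of "take (Suc j) g"] dg j lg
    by simp
  have s1: "VV s g j \<subseteq> {1..length s}" unfolding VV_def using sigma_set[OF ds] sub by fastforce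
  have fin: "finite (VV s g j)" unfolding VV_def by simp
  have ne: "VV s g j \<noteq> {}" using c by auto
  have "Suc j \<le> Max (VV s g j)" using card_le_Max[OF fin ne] s1 c by fastforce
  moreover have "Max (VV s g j) \<le> length s" using s1 fin ne Max_in by fastforce
  ultimately show ?thesis using c s1 fin ne by blast
qed

lemma Ffun_eq:
  assumes ds: "distinct s" and dg: "distinct g" and sg: "set g = set s" and j: "j < length s"
  shows "Ffun g s j = int (Max (VV s g j)) - 1"
proof -
  have lg: "length g = length s" using ds dg sg by (metis distinct_card)
  show ?thesis unfolding Ffun_def VV_def using take_img[of j g "sigma s"] j lg by simp
qed

definition hF :: "'a list \<Rightarrow> 'a list \<Rightarrow> nat list" where
  "hF s g = map (\<lambda>j. nat (Ffun g s j)) [1..<length s]"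

lemma hF_nth:
  assumes ds: "distinct s" and dg: "distinct g" and sg: "set g = set s" and i: "i < length s - 1"
  shows "hF s g ! i = Max (VV s g (Suc i)) - 1"
proof -
  have "hF s g ! i = nat (Ffun g s (Suc i))" unfolding hF_def using i by simp
  also have "\<dots> = Max (VV s g (Suc i)) - 1" using Ffun_eq[OF ds dg sg, of "Suc i"] i by simp
  finally show ?thesis .
qed

lemma hF_seqs:
  assumes ds: "distinct s" and dg: "distinct g" and sg: "set g = set s"
  shows "hF s g \<in> seqs (length s - 1) (length s - 1)"
proof -
  let ?n = "length s"
  have len: "length (hF s g) = ?n - 1" unfolding hF_def by simp
  have so: "sorted (hF s g)" unfolding sorted_iff_nth_mono
  proof (intro allI impI)
    fix i j assume ij: "i \<le> j" "j < length (hF s g)"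
    have p1: "finite (VV s g (Suc j))" "VV s g (Suc i) \<noteq> {}"
      using VV_props[OF ds dg sg, of "Suc j"] VV_props[OF ds dg sg, of "Suc i"] ij len by auto
    have "VV s g (Suc i) \<subseteq> VV s g (Suc j)" unfolding VV_def using ij
      by (intro image_mono set_take_subset_set_take) simp
    then have "Max (VV s g (Suc i)) \<le> Max (VV s g (Suc j))" using p1 by (intro Max_mono)
    then show "hF s g ! i \<le> hF s g ! j" using hF_nth[OF ds dg sg] ij len by simp
  qed
  have lb: "\<forall>i<?n-1. Suc i \<le> hF s g ! i"
  proof (intro allI impI)
    fix i assume i: "i < ?n - 1"
    have "Suc i < ?n" using i by simp
    then have "Suc (Suc i) \<le> Max (VV s g (Suc i))" using VV_props[OF ds dg sg, of "Suc i"] by blast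
    then show "Suc i \<le> hF s g ! i" using hF_nth[OF ds dg sg i] by simp
  qed
  have ub: "\<forall>x\<in>set (hF s g). x \<le> ?n - 1"
  proof
    fix x assume "x \<in> set (hF s g)"
    then obtain i where i: "i < ?n - 1" "x = hF s g ! i" using len by (auto simp: in_set_conv_nth)
    have "Suc i < ?n" using i by simp
    then have "Max (VV s g (Suc i)) \<le> ?n" using VV_props[OF ds dg sg, of "Suc i"] by blast
    then show "x \<le> ?n - 1" using hF_nth[OF ds dg sg i(1)] i by simp
  qed
  show ?thesis unfolding seqs_def using len so lb ub by simp
qed

definition RR :: "nat \<Rightarrow> nat list \<Rightarrow> (int \<times> int) set" where
  "RR n t = {(i, j). 1 \<le> j \<and> j \<le> i \<and> i \<le> int n - 1 \<and> i < int (t ! (nat j - 1))}"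

lemma roadblock_RR:
  assumes ds: "distinct s" and dg: "distinct g" and sg: "set g = set s"
  shows "roadblock g s = RR (length s) (hF s g)"
proof -
  { fix i j :: int assume h: "1 \<le> j" "j \<le> i" "i \<le> int (length s) - 1"
    then have a: "nat j - 1 < length s - 1" by linarith
    have sj: "Suc (nat j - 1) = nat j" using h by simp
    have "hF s g ! (nat j - 1) = nat (Ffun g s (Suc (nat j - 1)))" unfolding hF_def using a by simp
    then have f1: "hF s g ! (nat j - 1) = nat (Ffun g s (nat j))" by (simp only: sj)
    have a2: "nat j < length s" using a h by linarith
    have f2: "Ffun g s (nat j) \<ge> 0" using a2 Ffun_eq[OF ds dg sg, of "nat j"] VV_props[OF ds dg sg, of "nat j"] a
      by simp
    have "int (hF s g ! (nat j - 1)) = Ffun g s (nat j)" using f1 f2 by simp }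
  then show ?thesis unfolding roadblock_def RR_def by force
qed

lemma RR_inj: "inj_on (RR n) (seqs (n-1) (n-1))"
proof (rule inj_onI)
  fix t t' assume t: "t \<in> seqs (n-1) (n-1)" and t': "t' \<in> seqs (n-1) (n-1)" and e: "RR n t = RR n t'"
  have key: "\<not> (a!k < b!k)" if a: "a \<in> seqs (n-1) (n-1)" and b: "b \<in> seqs (n-1) (n-1)"
     and e: "RR n a = RR n b" and k: "k < n - 1" for a b k
  proof
    assume lt: "a!k < b!k"
    have la: "Suc k \<le> a!k" using a k by (simp add: seqs_def)
    have "b!k \<in> set b" using b k by (simp add: seqs_def)
    then have ub: "b!k \<le> n - 1" using b by (simp add: seqs_def)
    let ?i = "int (b!k) - 1" and ?j = "int (Suc k)"
    have nk: "nat (1 + int k) - Suc 0 = k" by (simp add: nat_add_distrib)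
    have "(?i, ?j) \<in> RR n b" unfolding RR_def using lt la ub nk by auto
    moreover have "(?i, ?j) \<notin> RR n a" unfolding RR_def using lt nk by auto
    ultimately show False using e by simp
  qed
  show "t = t'"
  proof (rule nth_equalityI)
    show "length t = length t'" using t t' by (simp add: seqs_def)
    fix k assume "k < length t"
    then have k: "k < n - 1" using t by (simp add: seqs_def)
    show "t!k = t'!k" using key[OF t t' e k] key[OF t' t e[symmetric] k] by simp
  qed
qed



lemma build_step:
  assumes p: "length p = length u" "distinct p" "set p \<subseteq> {1..N}"
      "\<forall>i<length u. Max (set (take (Suc i) p)) = u!i"
    and y: "y \<notin> set p" "1 \<le> y" "y \<le> N"
    and m: "p = [] \<and> y = x \<or> p \<noteq> [] \<and> max y (Max (set p)) = x"
  shows "length (p@[y]) = length (u@[x]) \<and> distinct (p@[y]) \<and> set (p@[y]) \<subseteq> {1..N}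
      \<and> (\<forall>i<length (u@[x]). Max (set (take (Suc i) (p@[y]))) = (u@[x])!i)"
proof -
  have "\<forall>i<length (u@[x]). Max (set (take (Suc i) (p@[y]))) = (u@[x])!i"
  proof (intro allI impI)
    fix i assume i: "i < length (u@[x])"
    show "Max (set (take (Suc i) (p@[y]))) = (u@[x])!i"
    proof (cases "i < length u")
      case True
      then have "take (Suc i) (p@[y]) = take (Suc i) p" using p(1) by simp
      then show ?thesis using True p(4) by (simp add: nth_append)
    next
      case False
      then have ii: "i = length u" using i by simp
      then have "take (Suc i) (p@[y]) = p@[y]" using p(1) by simp
      moreover have "Max (set (p@[y])) = x" using m by (auto simp: Max_insert max.commute)
      ultimately show ?thesis using ii by (simp add: nth_append)
    qed
  qed
  then show ?thesis using p y by simp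
qed

lemma build:
  "sorted u \<Longrightarrow> \<forall>i<length u. Suc i \<le> u!i \<and> u!i \<le> N \<Longrightarrow>
   \<exists>p. length p = length u \<and> distinct p \<and> set p \<subseteq> {1..N} \<and> (\<forall>i<length u. Max (set (take (Suc i) p)) = u!i)"
proof (induction u rule: rev_induct)
  case Nil then show ?case by simp
next
  case (snoc x u)
  have su: "sorted u" using snoc.prems(1) by (simp add: sorted_append)
  have cu: "\<forall>i<length u. Suc i \<le> u!i \<and> u!i \<le> N"
  proof (intro allI impI)
    fix i assume i: "i < length u"
    then have "(u@[x])!i = u!i" by (simp add: nth_append)
    then show "Suc i \<le> u!i \<and> u!i \<le> N" using snoc.prems(2)[rule_format, of i] i by simp
  qed
  obtain p where p: "length p = length u" "distinct p" "set p \<subseteq> {1..N}"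
      "\<forall>i<length u. Max (set (take (Suc i) p)) = u!i" using snoc.IH[OF su cu] by blast
  have cx: "Suc (length u) \<le> x" "x \<le> N" using snoc.prems(2)[rule_format, of "length u"] by (auto simp: nth_append)
  show ?case
  proof (cases "u = []")
    case True
    then have "p = []" using p(1) by simp
    show ?thesis using True cx by (intro exI[of _ "[x]"]) simp
  next
    case False
    then have pne: "p \<noteq> []" using p(1) by auto
    have "Max (set p) = last u"
    proof -
      have "take (Suc (length u - 1)) p = p" using p(1) False by simp
      then have "Max (set p) = u ! (length u - 1)" using p(4)[rule_format, of "length u - 1"] False by simp
      then show ?thesis using False by (simp add: last_conv_nth)
    qed
    moreover have lx: "last u \<le> x" using snoc.prems(1) False by (simp add: sorted_append)
    ultimately have mp: "Max (set p) \<le> x" by simp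
    show ?thesis
    proof (cases "Max (set p) < x")
      case True
      have "x \<notin> set p" 
      proof
        assume "x \<in> set p"
        then have "x \<le> Max (set p)" by (intro Max_ge) simp_all
        then show False using True by simp
      qed
      moreover have "max x (Max (set p)) = x" using True by simp
      ultimately have B: "length (p@[x]) = length (u@[x]) \<and> distinct (p@[x]) \<and> set (p@[x]) \<subseteq> {1..N}
      \<and> (\<forall>i<length (u@[x]). Max (set (take (Suc i) (p@[x]))) = (u@[x])!i)"
        using cx pne by (intro build_step[OF p]) simp_all
      show ?thesis using B by blast
    next
      case False
      then have mx: "Max (set p) = x" using mp by simp
      have sub: "set p \<subseteq> {1..x}" using p(3) mx pne by (auto intro: Max_ge)
      have "card (set p) = length u" using p(1,2) by (simp add: distinct_card)
      then have "card (set p) < card {1..x}" using cx by simp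
      then have "set p \<noteq> {1..x}" by auto
      then obtain v where v: "v \<in> {1..x}" "v \<notin> set p" using sub by blast
      have "max v (Max (set p)) = x" using v mx by simp
      then have B: "length (p@[v]) = length (u@[x]) \<and> distinct (p@[v]) \<and> set (p@[v]) \<subseteq> {1..N}
      \<and> (\<forall>i<length (u@[x]). Max (set (take (Suc i) (p@[v]))) = (u@[x])!i)"
        using v cx pne by (intro build_step[OF p]) simp_all
      show ?thesis using B by blast
    qed
  qed
qed



lemma surj_hF:
  assumes ds: "distinct s" and n: "length s = n" "2 \<le> n" and t: "t \<in> seqs (n-1) (n-1)"
  shows "\<exists>g. distinct g \<and> set g = set s \<and> hF s g = t"
proof -
  have lt: "length t = n - 1" and st: "sorted t" and lbt: "\<forall>i<n-1. Suc i \<le> t!i"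
    and ubt: "\<forall>x\<in>set t. x \<le> n-1" using t by (auto simp: seqs_def)
  have ubt': "\<And>i. i < n - 1 \<Longrightarrow> t!i \<le> n - 1" using ubt lt by (metis nth_mem)
  define u where "u = Suc (t!0) # map Suc t"
  have lu: "length u = n" using lt n by (simp add: u_def)
  have t0: "\<forall>y\<in>set t. t!0 \<le> y"
  proof
    fix y assume "y \<in> set t"
    then obtain k where k: "k < length t" "y = t!k" by (auto simp: in_set_conv_nth)
    then show "t!0 \<le> y" using st by (simp add: sorted_iff_nth_mono)
  qed
  have su: "sorted u" unfolding u_def using st t0 by (auto simp: sorted_map)
  have cu: "\<forall>i<length u. Suc i \<le> u!i \<and> u!i \<le> n"
  proof (intro allI impI)
    fix i assume i: "i < length u"
    show "Suc i \<le> u!i \<and> u!i \<le> n"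
    proof (cases i)
      case 0
      have "t!0 \<le> n - 1" using ubt'[of 0] n by simp
      then show ?thesis using 0 n by (simp add: u_def)
    next
      case (Suc k)
      then have k: "k < n - 1" using i lu by simp
      then show ?thesis using Suc lbt ubt'[OF k] lt n by (simp add: u_def)
    qed
  qed
  obtain p where p: "length p = n" "distinct p" "set p \<subseteq> {1..n}"
      "\<forall>i<n. Max (set (take (Suc i) p)) = u!i" using build[OF su cu] lu by auto
  have sp: "set p = {1..n}"
    using p by (intro card_subset_eq) (simp_all add: distinct_card)
  define f where "f = (\<lambda>v. s!(v-1))"
  define g where "g = map f p"
  have injf: "inj_on f {1..n}"
  proof (rule inj_onI)
    fix v w assume v: "v \<in> {1..n}" and w: "w \<in> {1..n}" and e: "f v = f w"
    have "v - 1 < length s" "w - 1 < length s" using v w n by auto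
    then have "v - 1 = w - 1" using ds e unfolding f_def by (simp add: nth_eq_iff_index_eq)
    then show "v = w" using v w by (simp add: atLeastAtMost_iff) linarith
  qed
  have dg: "distinct g" unfolding g_def using p(2) injf sp by (simp add: distinct_map)
  have sg: "set g = set s"
  proof -
    have "set g = f ` {1..n}" unfolding g_def using sp by simp
    also have "\<dots> = set s"
    proof
      show "f ` {1..n} \<subseteq> set s" unfolding f_def using n by auto
      show "set s \<subseteq> f ` {1..n}"
      proof
        fix x assume "x \<in> set s"
        then obtain i where i: "i < n" "x = s!i" using n by (auto simp: in_set_conv_nth)
        then have "x = f (Suc i)" "Suc i \<in> {1..n}" unfolding f_def by auto
        then show "x \<in> f ` {1..n}" by blast
      qed
    qed
    finally show ?thesis .
  qed
  have sf: "\<And>v. v \<in> set p \<Longrightarrow> sigma s (f v) = v"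
  proof -
    fix v assume "v \<in> set p"
    then have v: "1 \<le> v" "v \<le> n" using sp by auto
    then have "sigma s (f v) = Suc (v - 1)" unfolding f_def using sigma_nth[OF ds, of "v-1"] n by simp
    then show "sigma s (f v) = v" using v by simp
  qed
  have "hF s g = t"
  proof (rule nth_equalityI)
    show "length (hF s g) = length t" using lt n by (simp add: hF_def)
    fix i assume "i < length (hF s g)"
    then have i: "i < length s - 1" by (simp add: hF_def)
    have "VV s g (Suc i) = sigma s ` f ` set (take (Suc (Suc i)) p)"
      unfolding VV_def g_def by (simp add: take_map image_image)
    also have "\<dots> = set (take (Suc (Suc i)) p)"
    proof -
      have "\<forall>v\<in>set (take (Suc (Suc i)) p). sigma s (f v) = v" using sf by (meson in_set_takeD)
      then show ?thesis by (simp add: image_image)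
    qed
    finally have "Max (VV s g (Suc i)) = u ! Suc i" using p(4) i n by simp
    then show "hF s g ! i = t ! i" using hF_nth[OF ds dg sg i] i lt n by (simp add: u_def)
  qed
  then show ?thesis using dg sg by blast
qed

theorem proposition2:
  fixes X :: "'a set" and n :: nat and s :: "'a list"
  assumes "finite X" and "card X = n" and "n \<ge> 2"
    and "s \<in> cat_vecs X"
  shows "(\<exists>f. bij_betw f ((\<lambda>g. roadblock g s) ` cat_vecs X) (dyck_paths (n - 1)))
       \<and> card ((\<lambda>g. roadblock g s) ` cat_vecs X) = (2 * n - 2 choose (n - 1)) div n"
proof -
  have ds: "distinct s" and ss: "set s = X" using assms(4) by (auto simp: cat_vecs_def)
  have ls: "length s = n" using ds ss assms(2) by (metis distinct_card)
  have img: "(\<lambda>g. roadblock g s) ` cat_vecs X = RR n ` seqs (n-1) (n-1)"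
  proof
    show "(\<lambda>g. roadblock g s) ` cat_vecs X \<subseteq> RR n ` seqs (n-1) (n-1)"
    proof
      fix B assume "B \<in> (\<lambda>g. roadblock g s) ` cat_vecs X"
      then obtain g where g: "distinct g" "set g = set s" "B = roadblock g s"
        using ss by (auto simp: cat_vecs_def)
      then show "B \<in> RR n ` seqs (n-1) (n-1)"
        using roadblock_RR[OF ds g(1,2)] hF_seqs[OF ds g(1,2)] ls by auto
    qed
    show "RR n ` seqs (n-1) (n-1) \<subseteq> (\<lambda>g. roadblock g s) ` cat_vecs X"
    proof
      fix B assume "B \<in> RR n ` seqs (n-1) (n-1)"
      then obtain t where t: "t \<in> seqs (n-1) (n-1)" "B = RR n t" by blast
      obtain g where g: "distinct g" "set g = set s" "hF s g = t"
        using surj_hF[OF ds ls assms(3) t(1)] by blast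
      have "B = roadblock g s" using roadblock_RR[OF ds g(1,2)] g(3) t(2) ls by simp
      moreover have "g \<in> cat_vecs X" using g ss by (simp add: cat_vecs_def)
      ultimately show "B \<in> (\<lambda>g. roadblock g s) ` cat_vecs X" by blast
    qed
  qed
  have c1: "card ((\<lambda>g. roadblock g s) ` cat_vecs X) = cnt (n-1) (n-1)"
    unfolding img using card_image[OF RR_inj[of n]] seqs_card[of "n-1" "n-1"] by simp
  have f1: "finite ((\<lambda>g. roadblock g s) ` cat_vecs X)"
    unfolding img using seqs_card[of "n-1" "n-1"] by simp
  have c2: "card (dyck_paths (n-1)) = cnt (n-1) (n-1)" and f2: "finite (dyck_paths (n-1))"
    using dp_card[of "n-1" "n-1"] by (simp_all add: dyck_dp)
  have e: "cnt (n-1) (n-1) = (2 * n - 2 choose (n - 1)) div n"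
    using cnt_catalan[of "n-1"] assms(3) by (simp add: right_diff_distrib')
  show ?thesis using c1 c2 f1 f2 e bij_betw_iff_card by metis
qed

end
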